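(* Let $T$ be the closed isosceles trapezoid in the Euclidean plane whose parallel sides have lengths $1100$ and $1000$ and whose two legs each have length $600$. Then there exist $510$ closed rectangles, each of size $40\times 30$, all contained in $T$ and with pairwise disjoint interiors.
   Context: Rectangles may be placed at any position and with any orientation in the plane (they need not be axis-parallel). This is the paper's packing solution to Alcuin's quadrangular city problem (a city with sides $1100$, $1000$, $600$, $600$ feet, houses $40\times 30$ feet), interpreting the city as an isosceles trapezium. *)

theory Defs
  imports "HOL-Analysis.Analysis"
begin

text \<open>The closed isosceles trapezium with parallel sides 1100 (bottom) and 1000 (top)
  and legs of length 600. Height h satisfies 50^2 + h^2 = 600^2.\<close>

definition trap_height :: real where
  "trap_height = sqrt (600^2 - 50^2)"

definition trapezium :: "(real \<times> real) set" where
  "trapezium = convex hull {(0, 0), (1100, 0), (1050, trap_height), (50, trap_height)}"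

text \<open>The closed rectangle of size 40 x 30 with one corner at p, whose side of
  length 40 has direction angle \<theta> (arbitrary position and orientation).\<close>

definition house :: "real \<times> real \<Rightarrow> real \<Rightarrow> (real \<times> real) set" where
  "house p \<theta> = {(fst p + s * cos \<theta> - t * sin \<theta>, snd p + s * sin \<theta> + t * cos \<theta>) | s t.
                    0 \<le> s \<and> s \<le> 40 \<and> 0 \<le> t \<and> t \<le> 30}"

end

theory Submission imports Defs begin

lemma h_lb: "5979/10 \<le> trap_height"
  unfolding trap_height_def by (rule real_le_rsqrt) (simp add: power2_eq_square)

lemma pt_in:
  assumes "0 \<le> y" "y \<le> trap_height" "50*y \<le> trap_height * x" "50*y \<le> trap_height*(1100 - x)"
  shows "(x,y) \<in> trapezium"
proof -
  define h where "h = trap_height"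
  have hp: "h > 0" using h_lb h_def by simp
  define a where "a = y / h"
  have a0: "0 \<le> a" "a \<le> 1" using assms hp by (auto simp: a_def h_def)
  have yah: "y = a*h" using hp by (simp add: a_def)
  let ?C = "convex hull {(0::real, 0::real), (1100, 0), (1050, h), (50, h)}"
  have cv: "convex ?C" by (rule convex_convex_hull)
  have P: "(0,0) \<in> ?C" "(1100,0) \<in> ?C" "(1050,h) \<in> ?C" "(50,h) \<in> ?C"
    by (auto intro: hull_inc)
  have L: "(50*a, y) \<in> ?C"
  proof -
    have "(1-a) *\<^sub>R (0,0) + a *\<^sub>R (50,h) \<in> ?C"
      using convexD[OF cv P(1) P(4), of "1-a" a] a0 by simp
    thus ?thesis by (simp add: yah mult.commute)
  qed
  have R: "(1100 - 50*a, y) \<in> ?C"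
  proof -
    have "(1-a) *\<^sub>R (1100,0) + a *\<^sub>R (1050,h) \<in> ?C"
      using convexD[OF cv P(2) P(3), of "1-a" a] a0 by simp
    thus ?thesis by (simp add: yah algebra_simps)
  qed
  define m where "m = (x - 50*a) / (1100 - 100*a)"
  have den: "1100 - 100*a > 0" using a0 by simp
  have xl: "50*a \<le> x" using assms(3) hp yah
    by (metis h_def mult.commute mult_le_cancel_left_pos mult.assoc)
  have xr: "x \<le> 1100 - 50*a"
  proof -
    have "h*(50*a) \<le> h*(1100 - x)" using assms(4) yah h_def by (simp add: algebra_simps)
    hence "50*a \<le> 1100 - x" using hp by simp
    thus ?thesis by simp
  qed
  have m0: "0 \<le> m" "m \<le> 1" using den xl xr by (auto simp: m_def field_simps)
  have "(1-m) *\<^sub>R (50*a, y) + m *\<^sub>R (1100 - 50*a, y) \<in> ?C"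
    using convexD[OF cv L R, of "1-m" m] m0 by simp
  moreover have "(1-m) *\<^sub>R (50*a, y) + m *\<^sub>R (1100 - 50*a, y) = (x,y)"
  proof -
    have e: "m*(1100-100*a) = x - 50*a" using den by (simp add: m_def)
    have "(1-m)*(50*a) + m*(1100-50*a) = x" using e by (simp add: algebra_simps)
    thus ?thesis by (simp add: algebra_simps)
  qed
  ultimately show ?thesis unfolding trapezium_def h_def by simp
qed

lemma box_in:
  assumes "0 \<le> Y" "Y + hh \<le> 5979/10" "0 \<le> hh" "0 \<le> w"
    "50*(Y+hh) \<le> 5979/10 * X" "50*(Y+hh) \<le> 5979/10*(1100 - X - w)"
  shows "{X..X+w} \<times> {Y..Y+hh} \<subseteq> trapezium"
proof safe
  fix x y assume x: "x \<in> {X..X+w}" and y: "y \<in> {Y..Y+hh}"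
  have hl: "5979/10 \<le> trap_height" by (rule h_lb)
  have X0: "X \<ge> 0" using assms by (simp add: algebra_simps)
  show "(x,y) \<in> trapezium"
  proof (rule pt_in)
    show "0 \<le> y" using y assms by auto
    show "y \<le> trap_height" using y assms hl by auto
    have "50*y \<le> 5979/10 * x" using x y assms by auto
    also have "\<dots> \<le> trap_height * x" using hl x X0 by (intro mult_right_mono) auto
    finally show "50*y \<le> trap_height * x" .
    have "50*y \<le> 5979/10 * (1100 - x)" using x y assms by auto
    also have "\<dots> \<le> trap_height * (1100 - x)"
      using hl x assms by (intro mult_right_mono) auto
    finally show "50*y \<le> trap_height * (1100 - x)" .
  qed
qed

lemma house0: "house (a,b) 0 = {a..a+40} \<times> {b..b+30}"
proof
  show "house (a,b) 0 \<subseteq> {a..a+40} \<times> {b..b+30}" unfolding house_def by auto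
  show "{a..a+40} \<times> {b..b+30} \<subseteq> house (a,b) 0"
  proof clarify
    fix x y assume "x \<in> {a..a+40}" "y \<in> {b..b+30}"
    thus "(x,y) \<in> house (a,b) 0" unfolding house_def
      by (intro CollectI exI[of _ "x-a"] exI[of _ "y-b"]) auto
  qed
qed

lemma house90: "house (a,b) (pi/2) = {a-30..a} \<times> {b..b+40}"
proof
  show "house (a,b) (pi/2) \<subseteq> {a-30..a} \<times> {b..b+40}" unfolding house_def by auto
  show "{a-30..a} \<times> {b..b+40} \<subseteq> house (a,b) (pi/2)"
  proof clarify
    fix x y assume "x \<in> {a-30..a}" "y \<in> {b..b+40}"
    thus "(x,y) \<in> house (a,b) (pi/2)" unfolding house_def
      by (intro CollectI exI[of _ "y-b"] exI[of _ "a-x"]) auto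
  qed
qed

lemma box_disj:
  assumes "a2 \<le> c1 \<or> c2 \<le> a1 \<or> b2 \<le> d1 \<or> d2 \<le> b1"
  shows "interior ({a1..a2::real} \<times> {b1..b2::real}) \<inter> interior ({c1..c2} \<times> {d1..d2}) = {}"
  using assms by (auto simp: interior_Times)

definition htl :: "real list" where
  "htl = [40,40,30,40,40,40,30,30,30,30,40,40,40,30,30,30,30]"
definition cntl :: "nat list" where
  "cntl = [36,36,27,35,35,35,26,26,26,26,34,34,34,25,25,25,25]"
definition ht :: "nat \<Rightarrow> real" where "ht r = htl ! r"
definition cnt :: "nat \<Rightarrow> nat" where "cnt r = cntl ! r"
definition wd :: "nat \<Rightarrow> real" where "wd r = 70 - ht r"
definition yb :: "nat \<Rightarrow> real" where "yb r = sum_list (take r htl)"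
definition x0 :: "nat \<Rightarrow> real" where "x0 r = (1100 - real (cnt r) * wd r) / 2"
definition SS :: "(nat \<times> nat) set" where "SS = Sigma {..<17} (\<lambda>r. {..<cnt r})"

lemma card_SS: "card SS = 510"
  unfolding SS_def by (simp add: lessThan_nat_numeral cnt_def cntl_def)

lemma row_facts_all:
  "\<forall>r\<in>{..<17}. 50*(yb r + ht r) \<le> 5979/10 * x0 r \<and> yb r + ht r \<le> 5979/10 \<and> (ht r = 30 \<or> ht r = 40)"
  by (simp add: lessThan_nat_numeral yb_def ht_def htl_def x0_def cnt_def cntl_def wd_def)

lemma row_facts:
  assumes "r < 17"
  shows "50*(yb r + ht r) \<le> 5979/10 * x0 r \<and> yb r + ht r \<le> 5979/10 \<and> (ht r = 30 \<or> ht r = 40)"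
  using row_facts_all assms by blast

lemma htl_nonneg: "\<forall>x\<in>set htl. 0 \<le> x" by (simp add: htl_def)

lemma yb_Suc: "yb n \<le> yb (Suc n)"
proof (cases "n < length htl")
  case True
  then show ?thesis using htl_nonneg nth_mem[OF True]
    by (simp add: yb_def take_Suc_conv_app_nth)
next
  case False
  then show ?thesis by (simp add: yb_def)
qed

lemma yb_mono: "n \<le> m \<Longrightarrow> yb n \<le> yb m"
  by (rule lift_Suc_mono_le[of yb], rule yb_Suc)

lemma yb_step: "r < 17 \<Longrightarrow> yb (Suc r) = yb r + ht r"
  unfolding yb_def ht_def by (subst take_Suc_conv_app_nth) (auto simp: htl_def)

lemma yb_sep: "r < r' \<Longrightarrow> r < 17 \<Longrightarrow> yb r + ht r \<le> yb r'"
  using yb_step[of r] yb_mono[of "Suc r" r'] by simp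

lemma yb_nonneg: "0 \<le> yb r" using yb_mono[of 0 r] by (simp add: yb_def)

definition Box :: "nat \<times> nat \<Rightarrow> (real \<times> real) set" where
  "Box rk = (case rk of (r,k) \<Rightarrow>
     {x0 r + real k * wd r .. x0 r + real k * wd r + wd r} \<times> {yb r .. yb r + ht r})"
definition PP :: "nat \<times> nat \<Rightarrow> real \<times> real" where
  "PP rk = (case rk of (r,k) \<Rightarrow>
     (if ht r = 30 then (x0 r + real k * wd r, yb r) else (x0 r + real k * wd r + 30, yb r)))"
definition TT :: "nat \<times> nat \<Rightarrow> real" where
  "TT rk = (case rk of (r,k) \<Rightarrow> if ht r = 30 then 0 else pi/2)"

lemma house_Box: "r < 17 \<Longrightarrow> house (PP (r,k)) (TT (r,k)) = Box (r,k)"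
  using row_facts[of r]
  by (auto simp: PP_def TT_def Box_def house0 house90 wd_def)

lemma aux: "A + C \<le> (B::real) \<Longrightarrow> (1100 - B)/2 \<le> 1100 - ((1100-B)/2 + A) - C"
  by (simp add: field_simps)

lemma Box_in: "r < 17 \<Longrightarrow> k < cnt r \<Longrightarrow> Box (r,k) \<subseteq> trapezium"
proof -
  assume r: "r < 17" and k: "k < cnt r"
  note R = row_facts[OF r]
  have w0: "0 \<le> wd r" using R by (auto simp: wd_def)
  have kw: "0 \<le> real k * wd r" using w0 by simp
  have kw2: "real k * wd r + wd r \<le> real (cnt r) * wd r"
  proof -
    have "real k + 1 \<le> real (cnt r)" using k by simp
    hence "(real k + 1) * wd r \<le> real (cnt r) * wd r" using w0 by (rule mult_right_mono)
    thus ?thesis by (simp add: algebra_simps)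
  qed
  have h0: "0 \<le> ht r" using R by auto
  show ?thesis unfolding Box_def
  proof (simp only: prod.case, rule box_in)
    show "0 \<le> yb r" by (rule yb_nonneg)
    show "yb r + ht r \<le> 5979/10" using R by auto
    show "0 \<le> ht r" by (rule h0)
    show "0 \<le> wd r" by (rule w0)
    have "50*(yb r + ht r) \<le> 5979/10 * x0 r" using R by auto
    also have "\<dots> \<le> 5979/10 * (x0 r + real k * wd r)" using kw by simp
    finally show "50*(yb r + ht r) \<le> 5979/10 * (x0 r + real k * wd r)" .
    have "50*(yb r + ht r) \<le> 5979/10 * x0 r" using R by auto
    also have "\<dots> \<le> 5979/10 * (1100 - (x0 r + real k * wd r) - wd r)"
    proof -
      have "x0 r \<le> 1100 - (x0 r + real k * wd r) - wd r" using aux[OF kw2] unfolding x0_def .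
      thus ?thesis by simp
    qed
    finally show "50*(yb r + ht r) \<le> 5979/10 * (1100 - (x0 r + real k * wd r) - wd r)" .
  qed
qed

lemma Box_disj_aux:
  assumes "(r,k) \<in> SS" "(r',k') \<in> SS" "r < r' \<or> (r = r' \<and> k < k')"
  shows "interior (Box (r,k)) \<inter> interior (Box (r',k')) = {}"
proof -
  have r: "r < 17" "r' < 17" using assms by (auto simp: SS_def)
  have w0: "0 \<le> wd r" using row_facts[OF r(1)] by (auto simp: wd_def)
  from assms(3) show ?thesis
  proof
    assume "r < r'"
    hence "yb r + ht r \<le> yb r'" using yb_sep r by auto
    thus ?thesis unfolding Box_def prod.case by (intro box_disj) auto
  next
    assume a: "r = r' \<and> k < k'"
    have "(real k + 1) * wd r \<le> real k' * wd r"
      using a w0 by (intro mult_right_mono) auto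
    hence "x0 r + real k * wd r + wd r \<le> x0 r' + real k' * wd r'"
      using a by (simp add: algebra_simps)
    thus ?thesis unfolding Box_def prod.case by (intro box_disj) auto
  qed
qed

theorem mainTheorem1:
  shows "\<exists>(p :: nat \<Rightarrow> real \<times> real) (\<theta> :: nat \<Rightarrow> real).
           (\<forall>i<510. house (p i) (\<theta> i) \<subseteq> trapezium) \<and>
           (\<forall>i<510. \<forall>j<510. i \<noteq> j \<longrightarrow>
              interior (house (p i) (\<theta> i)) \<inter> interior (house (p j) (\<theta> j)) = {})"
proof -
  have fin: "finite SS" unfolding SS_def by auto
  obtain g :: "nat \<Rightarrow> nat \<times> nat" where g: "bij_betw g {0..<510} SS"
    using ex_bij_betw_nat_finite[OF fin] unfolding card_SS by auto
  have gS: "i < 510 \<Longrightarrow> g i \<in> SS" for i using g unfolding bij_betw_def by (metis atLeastLessThan_iff image_eqI zero_le)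
  have gi: "i < 510 \<Longrightarrow> j < 510 \<Longrightarrow> i \<noteq> j \<Longrightarrow> g i \<noteq> g j" for i j
    using g unfolding bij_betw_def inj_on_def by (metis atLeastLessThan_iff zero_le)
  have HB: "i < 510 \<Longrightarrow> house (PP (g i)) (TT (g i)) = Box (g i)" for i
    using gS[of i] house_Box by (auto simp: SS_def)
  show ?thesis
  proof (intro exI conjI allI impI)
    fix i :: nat assume i: "i < 510"
    obtain r k where rk: "g i = (r,k)" by fastforce
    have "r < 17" "k < cnt r" using gS[OF i] rk by (auto simp: SS_def)
    thus "house (PP (g i)) (TT (g i)) \<subseteq> trapezium"
      using HB[OF i] Box_in[of r k] rk by simp
  next
    fix i j :: nat assume i: "i < 510" and j: "j < 510" and ij: "i \<noteq> j"
    obtain r k where rk: "g i = (r,k)" by fastforce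
    obtain r' k' where rk': "g j = (r',k')" by fastforce
    have ne: "(r,k) \<noteq> (r',k')" using gi[OF i j ij] rk rk' by simp
    have m1: "(r,k) \<in> SS" "(r',k') \<in> SS" using gS[OF i] gS[OF j] rk rk' by auto
    have "interior (Box (r,k)) \<inter> interior (Box (r',k')) = {}"
    proof (cases "r < r' \<or> (r = r' \<and> k < k')")
      case True thus ?thesis using Box_disj_aux m1 by blast
    next
      case False
      hence "r' < r \<or> (r' = r \<and> k' < k)" using ne by auto
      thus ?thesis using Box_disj_aux[OF m1(2) m1(1)] by blast
    qed
    thus "interior (house (PP (g i)) (TT (g i))) \<inter> interior (house (PP (g j)) (TT (g j))) = {}"
      using HB[OF i] HB[OF j] rk rk' by simp
  qed
qed

end
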